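(* Let $I$ be an ideal of $\mathbb{R}_{max}[x_1,\dots,x_n]$. Then the coordinate-wise symmetrization map $\varphi=s^n:(\mathbb{R}_{max})^n\longrightarrow (s(\mathbb{R}_{max}))^n$ induces a set bijection \[trop(V(I)):= \bigcap_{f\in I} trop(V(f)) \simeq \Big(\bigcap_{f\in I}HV(f)\Big) \bigcap \operatorname{Im}\varphi.\]
   Context: Let $M=\mathbb{R}_{max}=(\mathbb{R}\cup\{-\infty\},\max,+)$ be the tropical semifield (addition is $\max$, multiplication is the usual addition of reals), totally ordered by the usual order. Its symmetrization is $R=s(M)=\{(a,1),(a,-1)\mid a\in M\setminus\{-\infty\}\}\cup\{0\}$, where $0=(-\infty,1)=(-\infty,-1)$; write $(a,1)=a$, $(a,-1)=-a$, $|(a,\pm1)|=a$. The hyperaddition on $R$ is: $x+y=\{x\}$ if $|x|>|y|$ or $x=y$; $x+y=\{y\}$ if $|x|<|y|$; and $x+(-x)=\{(t,\pm1)\mid t\le |x|\}$. Multiplication is component-wise, $(a,p)(b,q)=(a+b,pq)$. With these operations $R$ is a hyperfield. Let $s:M\to R$, $a\mapsto (a,1)$, and $\varphi=s^n:M^n\to R^n$ coordinate-wise; $\varphi$ is injective. For a polynomial $g=\sum_I a_I X^I$ over the hyperfield $R$ (no repeated monomials) and $\alpha\in R^n$, the evaluation $g(\alpha)=\sum_I a_I\alpha^I$ is a subset of $R$. For $f\in M[x_1,\dots,x_n]$, fix a presentation $f=\sum_i m_i$ as a sum of distinct monomials, and set $\tilde f_{\hat i}:=\sum_{j\neq i}(m_j,1)+(m_i,-1)\in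 R[x_1,\dots,x_n]$ (identifying coefficients $a\in M$ with $(a,1)\in R$), $V(\tilde f_{\hat i}):=\{z\in R^n\mid 0\in \tilde f_{\hat i}(z)\}$, and $HV(f):=\bigcup_i V(\tilde f_{\hat i})$. The tropical hypersurface $trop(V(f))$ is the set of $a\in M^n$ (coordinates equal to $-\infty$ allowed) at which the maximum among the values of the monomials of $f$ is attained at least twice. It was shown earlier that $\varphi$ restricts to a bijection $trop(V(f))\simeq HV(f)\cap\operatorname{Im}\varphi$ for each single $f$. *)

theory Defs
  imports "HOL-Library.Extended_Real"
begin

text \<open>Elements of M = R_max are modelled as extended reals different from +\<infinity>;
  -\<infinity> is the tropical zero. Variables are indexed by a finite type 'n (n = CARD('n)).  A tropical polynomial is its coefficient
  function, with -\<infinity> meaning "monomial absent"; it must have finite support and no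
  coefficient +\<infinity>.\<close>

type_synonym 'n mono = "'n \<Rightarrow> nat"
type_synonym 'n tpoly = "'n mono \<Rightarrow> ereal"

definition tpoints :: "('n \<Rightarrow> ereal) set" where
  "tpoints = {a. \<forall>i. a i \<noteq> \<infinity>}"

definition tsupp :: "'n tpoly \<Rightarrow> 'n mono set" where
  "tsupp p = {I. p I \<noteq> -\<infinity>}"

definition tpolys :: "'n tpoly set" where
  "tpolys = {p. finite (tsupp p) \<and> (\<forall>I. p I \<noteq> \<infinity>)}"

definition tpoly_zero :: "'n tpoly" where
  "tpoly_zero = (\<lambda>I. -\<infinity>)"

definition tpoly_add :: "'n tpoly \<Rightarrow> 'n tpoly \<Rightarrow> 'n tpoly" where
  "tpoly_add p q = (\<lambda>I. max (p I) (q I))"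

definition tpoly_mul :: "'n tpoly \<Rightarrow> 'n tpoly \<Rightarrow> 'n tpoly" where
  "tpoly_mul p q = (\<lambda>I. Sup {p J + q K | J K. (\<forall>v. J v + K v = I v)})"

definition tideal :: "'n tpoly set \<Rightarrow> bool" where
  "tideal S \<longleftrightarrow> S \<subseteq> tpolys \<and> tpoly_zero \<in> S
     \<and> (\<forall>f\<in>S. \<forall>g\<in>S. tpoly_add f g \<in> S)
     \<and> (\<forall>f\<in>S. \<forall>g\<in>tpolys. tpoly_mul g f \<in> S)"

text \<open>Tropical value of the monomial with exponent I of p at a (convention x^0 = 0).\<close>
definition mono_val :: "'n::finite tpoly \<Rightarrow> 'n mono \<Rightarrow> ('n \<Rightarrow> ereal) \<Rightarrow> ereal" where
  "mono_val p I a = p I + (\<Sum>i\<in>UNIV. if I i = 0 then 0 else ereal (real (I i)) * a i)"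

definition trop_hyp :: "'n::finite tpoly \<Rightarrow> ('n \<Rightarrow> ereal) set" where
  "trop_hyp p = {a \<in> tpoints.
     (\<exists>I\<in>tsupp p. \<exists>J\<in>tsupp p. I \<noteq> J \<and> mono_val p I a = mono_val p J a
         \<and> (\<forall>K\<in>tsupp p. mono_val p K a \<le> mono_val p I a))
     \<or> (\<forall>K\<in>tsupp p. mono_val p K a = -\<infinity>)}"

definition tropV :: "'n::finite tpoly set \<Rightarrow> ('n \<Rightarrow> ereal) set" where
  "tropV S = tpoints \<inter> (\<Inter>f\<in>S - {tpoly_zero}. trop_hyp f)"

datatype sym = SZero | SPos real | SNeg real
  \<comment> \<open>SPos a = (a,1), SNeg a = (a,-1), SZero = (-\<infinity>,\<plusminus>1)\<close>

fun sabs :: "sym \<Rightarrow> ereal" where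
  "sabs SZero = -\<infinity>"
| "sabs (SPos a) = ereal a"
| "sabs (SNeg a) = ereal a"

definition hadd :: "sym \<Rightarrow> sym \<Rightarrow> sym set" where
  "hadd x y = (if sabs x > sabs y \<or> x = y then {x}
               else if sabs x < sabs y then {y}
               else {t. sabs t \<le> sabs x})"

fun smul :: "sym \<Rightarrow> sym \<Rightarrow> sym" where
  "smul SZero y = SZero"
| "smul x SZero = SZero"
| "smul (SPos a) (SPos b) = SPos (a + b)"
| "smul (SPos a) (SNeg b) = SNeg (a + b)"
| "smul (SNeg a) (SPos b) = SNeg (a + b)"
| "smul (SNeg a) (SNeg b) = SPos (a + b)"

definition sone :: sym where "sone = SPos 0"

fun spow :: "sym \<Rightarrow> nat \<Rightarrow> sym" where
  "spow x 0 = sone"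
| "spow x (Suc k) = smul x (spow x k)"

definition setplus :: "sym set \<Rightarrow> sym set \<Rightarrow> sym set" where
  "setplus A B = (\<Union>a\<in>A. \<Union>b\<in>B. hadd a b)"

definition smon :: "('n::finite \<Rightarrow> sym) \<Rightarrow> 'n mono \<Rightarrow> sym" where
  "smon \<alpha> I = Finite_Set.fold (\<lambda>i acc. smul (spow (\<alpha> i) (I i)) acc) sone UNIV"

type_synonym 'n spoly = "'n mono \<Rightarrow> sym"

definition ssupp :: "'n spoly \<Rightarrow> 'n mono set" where
  "ssupp g = {I. g I \<noteq> SZero}"

definition seval :: "'n::finite spoly \<Rightarrow> ('n \<Rightarrow> sym) \<Rightarrow> sym set" where
  "seval g \<alpha> = Finite_Set.fold (\<lambda>I A. setplus {smul (g I) (smon \<alpha> I)} A) {SZero} (ssupp g)"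

definition sV :: "'n::finite spoly \<Rightarrow> ('n \<Rightarrow> sym) set" where
  "sV g = {z. SZero \<in> seval g z}"

fun semb :: "ereal \<Rightarrow> sym" where
  "semb (ereal r) = SPos r"
| "semb _ = SZero"

definition phi :: "('n \<Rightarrow> ereal) \<Rightarrow> ('n \<Rightarrow> sym)" where
  "phi a = (\<lambda>i. semb (a i))"

definition ftilde :: "'n tpoly \<Rightarrow> 'n mono \<Rightarrow> 'n spoly" where
  "ftilde f i = (\<lambda>J. if f J = -\<infinity> then SZero
                     else if J = i then SNeg (real_of_ereal (f J))
                     else SPos (real_of_ereal (f J)))"

definition HV :: "'n::finite tpoly \<Rightarrow> ('n \<Rightarrow> sym) set" where
  "HV f = (\<Union>i\<in>tsupp f. sV (ftilde f i))"

end

theory Submission imports Defs begin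

fun sneg :: "sym \<Rightarrow> sym" where
  "sneg SZero = SZero" | "sneg (SPos a) = SNeg a" | "sneg (SNeg a) = SPos a"

lemma sabs_ninf[simp]: "sabs x \<noteq> \<infinity>" by (cases x) auto
lemma sabs_minf[simp]: "sabs x = -\<infinity> \<longleftrightarrow> x = SZero" by (cases x) auto
lemma sabs_sneg[simp]: "sabs (sneg x) = sabs x" by (cases x) auto

lemma same_abs: "sabs v = sabs w \<Longrightarrow> v \<noteq> w \<Longrightarrow> w = sneg v"
  by (cases v; cases w) auto

lemma hadd_sub: "hadd x b \<subseteq> {t. sabs t \<le> max (sabs x) (sabs b)}"
  unfolding hadd_def by auto

lemma hadd_neg: "x \<noteq> SZero \<Longrightarrow> hadd x (sneg x) = {t. sabs t \<le> sabs x}"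
  unfolding hadd_def by (cases x) auto

definition topS :: "sym set \<Rightarrow> ereal" where "topS V = Sup (sabs ` V)"
definition topset :: "sym set \<Rightarrow> sym set" where "topset V = {w\<in>V. sabs w = topS V}"
definition SS :: "sym set \<Rightarrow> sym set" where
  "SS V = (if \<exists>v. topset V = {v} then topset V else {t. sabs t \<le> topS V})"

lemma topS_insert: "topS (insert x V) = max (sabs x) (topS V)"
  unfolding topS_def by (simp add: sup_max)

lemma topS_empty[simp]: "topS {} = -\<infinity>" unfolding topS_def by (simp add: bot_ereal_def)

lemma topS_ge: "w \<in> V \<Longrightarrow> sabs w \<le> topS V"
  unfolding topS_def by (simp add: Sup_upper)

lemma topS_attained: "finite V \<Longrightarrow> V \<noteq> {} \<Longrightarrow> \<exists>w\<in>V. sabs w = topS V"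
proof -
  assume a: "finite V" "V \<noteq> {}"
  hence "Max (sabs ` V) \<in> sabs ` V" by (intro Max_in) auto
  moreover have "Max (sabs ` V) = topS V" unfolding topS_def using a by (simp add: Max_Sup)
  ultimately show ?thesis by auto
qed

lemma SS_sub: "SS V \<subseteq> {t. sabs t \<le> topS V}"
  unfolding SS_def topset_def by auto

lemma SS_ne: "SS V \<noteq> {}"
  unfolding SS_def by (auto intro: exI[of _ SZero])

lemma big_union:
  assumes "sabs x \<le> m"
  shows "(\<Union>b\<in>{t. sabs t \<le> m}. hadd x b) = {t. sabs t \<le> m}"
proof
  show "(\<Union>b\<in>{t. sabs t \<le> m}. hadd x b) \<subseteq> {t. sabs t \<le> m}"
  proof
    fix t assume "t \<in> (\<Union>b\<in>{t. sabs t \<le> m}. hadd x b)"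
    then obtain b where "sabs b \<le> m" "t \<in> hadd x b" by auto
    hence "sabs t \<le> max (sabs x) (sabs b)" using hadd_sub[of x b] by blast
    thus "t \<in> {t. sabs t \<le> m}" using \<open>sabs b \<le> m\<close> assms
      by (metis max.bounded_iff order.trans mem_Collect_eq)
  qed
  show "{t. sabs t \<le> m} \<subseteq> (\<Union>b\<in>{t. sabs t \<le> m}. hadd x b)"
  proof
    fix t assume t: "t \<in> {t. sabs t \<le> m}"
    show "t \<in> (\<Union>b\<in>{t. sabs t \<le> m}. hadd x b)"
    proof (cases "sabs t > sabs x")
      case True
      hence "hadd x t = {t}" unfolding hadd_def by auto
      thus ?thesis using t by blast
    next
      case False
      show ?thesis
      proof (cases "x = SZero")
        case True
        hence "t = SZero" using False by (cases t) auto
        thus ?thesis using True t unfolding hadd_def by auto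
      next
        case nz: False
        have "t \<in> hadd x (sneg x)" using hadd_neg[OF nz] False by auto
        thus ?thesis using assms by (intro UN_I[of "sneg x"]) auto
      qed
    qed
  qed
qed

lemma setplus_single: "setplus {x} A = (\<Union>b\<in>A. hadd x b)"
  unfolding setplus_def by auto

lemma SS_insert:
  assumes fin: "finite V"
  shows "setplus {x} (SS V) = SS (insert x V)"
proof -
  define m where "m = topS V"
  have m': "topS (insert x V) = max (sabs x) m" unfolding m_def by (rule topS_insert)
  show ?thesis
  proof (cases "sabs x > m")
    case True
    hence "topset (insert x V) = {x}" unfolding topset_def using m' topS_ge[of _ V] m_def
      by fastforce
    hence R: "SS (insert x V) = {x}" unfolding SS_def by auto
    have "\<And>b. b \<in> SS V \<Longrightarrow> hadd x b = {x}"
    proof -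
      fix b assume "b \<in> SS V"
      hence "sabs b < sabs x" using SS_sub[of V] True m_def by force
      thus "hadd x b = {x}" unfolding hadd_def by auto
    qed
    thus ?thesis using SS_ne[of V] R unfolding setplus_single by auto
  next
    case False
    note F = False
    show ?thesis
    proof (cases "sabs x < m")
      case True
      hence tt: "topset (insert x V) = topset V" unfolding topset_def using m' m_def by auto
      have Vne: "V \<noteq> {}" using True m_def by auto
      show ?thesis
      proof (cases "\<exists>v. topset V = {v}")
        case True
        then obtain v where v: "topset V = {v}" by auto
        hence "sabs v = m" unfolding topset_def m_def by auto
        hence "hadd x v = {v}" using \<open>sabs x < m\<close> unfolding hadd_def by auto
        thus ?thesis using v tt unfolding SS_def setplus_single by auto
      next
        case False
        thus ?thesis using tt big_union[of x m] \<open>sabs x < m\<close> m' m_def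
          unfolding SS_def setplus_single by auto
      qed
    next
      case False
      hence eq: "sabs x = m" using F by auto
      hence m2: "topS (insert x V) = m" using m' by auto
      have tt: "topset (insert x V) = insert x (topset V)"
        unfolding topset_def using m2 eq m_def by auto
      show ?thesis
      proof (cases "topset V = {}")
        case True
        hence "V = {}" using topS_attained[OF fin] unfolding topset_def by auto
        hence "x = SZero" using eq m_def by auto
        thus ?thesis using True tt \<open>V = {}\<close> unfolding SS_def setplus_single hadd_def by auto
      next
        case ne: False
        show ?thesis
        proof (cases "\<exists>v. topset V = {v}")
          case True
          then obtain v where v: "topset V = {v}" by auto
          hence sv: "sabs v = m" unfolding topset_def m_def by auto
          show ?thesis
          proof (cases "v = x")
            case True
            thus ?thesis using v tt unfolding SS_def setplus_single hadd_def by auto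
          next
            case False
            hence "hadd x v = {t. sabs t \<le> m}" unfolding hadd_def using sv eq by auto
            moreover have "\<not> (\<exists>w. insert x {v} = {w})" using False by auto
            ultimately show ?thesis using v tt m2 unfolding SS_def setplus_single by auto
          qed
        next
          case False
          then obtain v w where vw: "v \<in> topset V" "w \<in> topset V" "v \<noteq> w"
            using ne by blast
          hence "\<not> (\<exists>u. insert x (topset V) = {u})" by auto
          hence "SS (insert x V) = {t. sabs t \<le> m}" using tt m2 unfolding SS_def by auto
          moreover have "SS V = {t. sabs t \<le> m}" using False m_def unfolding SS_def by auto
          ultimately show ?thesis using big_union[of x m] eq
            unfolding setplus_single by auto
        qed
      qed
    qed
  qed
qed


lemma SS_single: "SS {a} = {a}"
  unfolding SS_def topset_def topS_def by auto

lemma SS_empty: "SS {} = {SZero}"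
  unfolding SS_def topset_def by auto

lemma hadd_SS: "hadd y a = SS {y, a}"
proof -
  have "hadd y a = setplus {y} (SS {a})" unfolding SS_single setplus_def by auto
  also have "\<dots> = SS {y, a}" by (rule SS_insert) auto
  finally show ?thesis .
qed

lemma setplus_comm: "setplus {x} (setplus {y} A) = setplus {y} (setplus {x} A)"
proof -
  have *: "\<And>a. setplus {x} (hadd y a) = setplus {y} (hadd x a)"
  proof -
    fix a
    have "setplus {x} (hadd y a) = SS {x, y, a}" unfolding hadd_SS by (rule SS_insert) auto
    moreover have "setplus {y} (hadd x a) = SS {y, x, a}" unfolding hadd_SS by (rule SS_insert) auto
    moreover have "SS {x, y, a} = SS {y, x, a}" by (simp only: insert_commute)
    ultimately show "setplus {x} (hadd y a) = setplus {y} (hadd x a)" by simp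
  qed
  have e: "\<And>x y. setplus {x} (setplus {y} A) = (\<Union>a\<in>A. setplus {x} (hadd y a))"
    unfolding setplus_def by auto
  show ?thesis unfolding e using * by simp
qed

lemma cfc_plus: "comp_fun_commute (\<lambda>I A. setplus {t I} A)"
proof
  fix x y
  show "(\<lambda>A. setplus {t y} A) \<circ> (\<lambda>A. setplus {t x} A) = (\<lambda>A. setplus {t x} A) \<circ> (\<lambda>A. setplus {t y} A)"
    by (rule ext) (simp only: comp_apply setplus_comm)
qed

lemma fold_SS:
  assumes "finite K"
  shows "Finite_Set.fold (\<lambda>I A. setplus {t I} A) {SZero} K = SS (t ` K)"
  using assms
proof (induction K rule: finite_induct)
  case empty
  then show ?case using SS_empty by simp
next
  case (insert J K)
  have "Finite_Set.fold (\<lambda>I A. setplus {t I} A) {SZero} (insert J K)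
      = setplus {t J} (Finite_Set.fold (\<lambda>I A. setplus {t I} A) {SZero} K)"
  proof -
    interpret comp_fun_commute "\<lambda>I A. setplus {t I} A" by (rule cfc_plus)
    show ?thesis by (rule fold_insert[OF insert.hyps(1,2)])
  qed
  also have "\<dots> = SS (insert (t J) (t ` K))" unfolding insert.IH by (rule SS_insert) (use insert.hyps in simp)
  finally show ?case by (simp only: image_insert)
qed

lemma seval_SS: "finite (ssupp g) \<Longrightarrow> seval g \<alpha> = SS ((\<lambda>I. smul (g I) (smon \<alpha> I)) ` ssupp g)"
  unfolding seval_def by (rule fold_SS)

lemma SZero_SS: "SZero \<in> SS V \<longleftrightarrow> (topS V = -\<infinity> \<or> \<not> (\<exists>v. topset V = {v}))"
proof (cases "\<exists>v. topset V = {v}")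
  case True
  then obtain v where v: "topset V = {v}" by blast
  hence sv: "sabs v = topS V" unfolding topset_def by blast
  have "SS V = {v}" using v True unfolding SS_def by simp
  hence "SZero \<in> SS V \<longleftrightarrow> v = SZero" by (simp add: eq_commute)
  also have "\<dots> \<longleftrightarrow> topS V = -\<infinity>" using sv sabs_minf[of v] by simp
  finally show ?thesis using True by blast
next
  case False
  hence "SS V = {t. sabs t \<le> topS V}" unfolding SS_def by simp
  thus ?thesis using False by simp
qed

lemma smul_comm: "smul x y = smul y x"
  by (cases x; cases y) (auto simp: algebra_simps)

lemma smul_assoc: "smul (smul x y) z = smul x (smul y z)"
  by (cases x; cases y; cases z) (auto simp: algebra_simps)

lemma cfc_mul: "comp_fun_commute (\<lambda>i acc. smul (h i) acc)"
proof
  fix x y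
  show "(\<lambda>acc. smul (h y) acc) \<circ> (\<lambda>acc. smul (h x) acc) = (\<lambda>acc. smul (h x) acc) \<circ> (\<lambda>acc. smul (h y) acc)"
    by (rule ext) (metis comp_apply smul_assoc smul_comm)
qed

lemma semb_minf[simp]: "semb (-\<infinity>) = SZero"
  by (metis MInfty_eq_minfinity semb.simps(3))

lemma smul_semb: "x \<noteq> \<infinity> \<Longrightarrow> y \<noteq> \<infinity> \<Longrightarrow> smul (semb x) (semb y) = semb (x + y)"
  by (cases x; cases y) simp_all

lemma spow_semb: "e \<noteq> \<infinity> \<Longrightarrow> spow (semb e) k = semb (if k = 0 then 0 else ereal (real k) * e)"
proof (induction k)
  case 0
  then show ?case by (simp add: sone_def zero_ereal_def)
next
  case (Suc k)
  have ne: "(if k = 0 then 0 else ereal (real k) * e) \<noteq> \<infinity>"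
    using Suc.prems by (cases e) auto
  have "spow (semb e) (Suc k) = semb (e + (if k = 0 then 0 else ereal (real k) * e))"
    using Suc smul_semb[OF Suc.prems ne] by simp
  also have "e + (if k = 0 then 0 else ereal (real k) * e) = ereal (real (Suc k)) * e"
    using Suc.prems by (cases e) (auto simp: algebra_simps)
  finally show ?case by simp
qed

definition esum :: "('n \<Rightarrow> nat) \<Rightarrow> ('n \<Rightarrow> ereal) \<Rightarrow> 'n set \<Rightarrow> ereal" where
  "esum J a F = (\<Sum>i\<in>F. if J i = 0 then 0 else ereal (real (J i)) * a i)"

lemma fold_smon:
  assumes "finite F" "\<forall>i. a i \<noteq> \<infinity>"
  shows "Finite_Set.fold (\<lambda>i acc. smul (spow (phi a i) (J i)) acc) sone F = semb (esum J a F)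
         \<and> esum J a F \<noteq> \<infinity>"
  using assms(1)
proof (induction F rule: finite_induct)
  case empty
  then show ?case by (simp add: esum_def sone_def zero_ereal_def)
next
  case (insert i F)
  define tm where "tm = (if J i = 0 then 0 else ereal (real (J i)) * a i)"
  have tm: "tm \<noteq> \<infinity>" using assms(2) unfolding tm_def by (cases "a i") auto
  have es: "esum J a (insert i F) = tm + esum J a F"
    using insert unfolding esum_def tm_def by simp
  have "Finite_Set.fold (\<lambda>i acc. smul (spow (phi a i) (J i)) acc) sone (insert i F)
      = smul (spow (phi a i) (J i)) (Finite_Set.fold (\<lambda>i acc. smul (spow (phi a i) (J i)) acc) sone F)"
  proof -
    interpret comp_fun_commute "\<lambda>i acc. smul (spow (phi a i) (J i)) acc" by (rule cfc_mul)
    show ?thesis by (rule fold_insert[OF insert.hyps(1,2)])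
  qed
  also have "\<dots> = smul (semb tm) (semb (esum J a F))"
  proof -
    have "spow (phi a i) (J i) = semb tm"
      using spow_semb[of "a i" "J i"] assms(2) unfolding phi_def tm_def by simp
    thus ?thesis by (simp only: insert.IH[THEN conjunct1])
  qed
  also have "\<dots> = semb (esum J a (insert i F))"
    using smul_semb[OF tm insert.IH[THEN conjunct2]] es by simp
  finally have 1: "Finite_Set.fold (\<lambda>i acc. smul (spow (phi a i) (J i)) acc) sone (insert i F) = semb (esum J a (insert i F))" .
  have 2: "esum J a (insert i F) \<noteq> \<infinity>" using es tm insert.IH[THEN conjunct2] by simp
  show ?case using 1 2 by (rule conjI)
qed

lemma smon_phi:
  assumes "a \<in> tpoints"
  shows "smon (phi a) J = semb (esum J a UNIV) \<and> esum J a UNIV \<noteq> \<infinity>"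
  using fold_smon[of UNIV a J] assms unfolding smon_def tpoints_def by simp


lemma abstract_key:
  assumes fin: "finite K" and ab: "\<forall>J\<in>K. sabs (tv J) = mv J"
  shows "SZero \<in> SS (tv ` K) \<longleftrightarrow>
    ((\<forall>J\<in>K. mv J = -\<infinity>) \<or> (\<exists>I\<in>K. \<exists>J\<in>K. tv I \<noteq> tv J \<and> mv I = mv J \<and> (\<forall>L\<in>K. mv L \<le> mv I)))"
proof -
  define V where "V = tv ` K"
  have finV: "finite V" using fin V_def by simp
  have ge: "mv L \<le> topS V" if L: "L \<in> K" for L
  proof -
    have "tv L \<in> V" unfolding V_def using L by (rule imageI)
    hence "sabs (tv L) \<le> topS V" by (rule topS_ge)
    thus ?thesis using ab L by simp
  qed
  have le: "topS V \<le> c" if c: "\<forall>L\<in>K. mv L \<le> c" for c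
    unfolding topS_def
  proof (rule Sup_least)
    fix y assume "y \<in> sabs ` V"
    then obtain L where L: "L \<in> K" "y = sabs (tv L)" unfolding V_def by blast
    thus "y \<le> c" using ab c by simp
  qed
  have allm: "\<forall>J\<in>K. mv J = -\<infinity>" if "topS V = -\<infinity>"
  proof
    fix J assume "J \<in> K"
    hence "mv J \<le> -\<infinity>" using ge that by metis
    thus "mv J = -\<infinity>" by simp
  qed
  show ?thesis unfolding V_def[symmetric] SZero_SS
  proof
    assume "topS V = - \<infinity> \<or> \<not> (\<exists>v. topset V = {v})"
    thus "(\<forall>J\<in>K. mv J = -\<infinity>) \<or> (\<exists>I\<in>K. \<exists>J\<in>K. tv I \<noteq> tv J \<and> mv I = mv J \<and> (\<forall>L\<in>K. mv L \<le> mv I))"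
    proof
      assume "topS V = -\<infinity>"
      thus ?thesis by (rule disjI1[OF allm])
    next
      assume ns: "\<not> (\<exists>v. topset V = {v})"
      show ?thesis
      proof (cases "topS V = -\<infinity>")
        case True
        thus ?thesis by (rule disjI1[OF allm])
      next
        case False
        hence "V \<noteq> {}" by auto
        then obtain v where v: "v \<in> topset V" using topS_attained[OF finV] unfolding topset_def by blast
        with ns obtain w where w: "w \<in> topset V" "w \<noteq> v" by blast
        from v obtain I where I: "I \<in> K" "v = tv I" "mv I = topS V"
          unfolding topset_def V_def using ab by auto
        from w obtain J where J: "J \<in> K" "w = tv J" "mv J = topS V"
          unfolding topset_def V_def using ab by auto
        have "tv I \<noteq> tv J" using I J w by simp
        moreover have "mv I = mv J" using I J by simp
        moreover have "\<forall>L\<in>K. mv L \<le> mv I" using ge I by simp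
        ultimately show ?thesis using I(1) J(1) by blast
      qed
    qed
  next
    assume "(\<forall>J\<in>K. mv J = -\<infinity>) \<or> (\<exists>I\<in>K. \<exists>J\<in>K. tv I \<noteq> tv J \<and> mv I = mv J \<and> (\<forall>L\<in>K. mv L \<le> mv I))"
    thus "topS V = - \<infinity> \<or> \<not> (\<exists>v. topset V = {v})"
    proof
      assume A: "\<forall>J\<in>K. mv J = -\<infinity>"
      have "topS V \<le> -\<infinity>" using A by (intro le) simp
      thus ?thesis by simp
    next
      assume "\<exists>I\<in>K. \<exists>J\<in>K. tv I \<noteq> tv J \<and> mv I = mv J \<and> (\<forall>L\<in>K. mv L \<le> mv I)"
      then obtain I J where IJ: "I \<in> K" "J \<in> K" "tv I \<noteq> tv J" "mv I = mv J" "\<forall>L\<in>K. mv L \<le> mv I"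
        by blast
      have M: "topS V = mv I" using le[OF IJ(5)] ge[OF IJ(1)] by simp
      have "tv I \<in> V" "tv J \<in> V" unfolding V_def using IJ(1,2) by auto
      hence "tv I \<in> topset V" "tv J \<in> topset V"
        unfolding topset_def using IJ M ab by auto
      hence "\<not> (\<exists>v. topset V = {v})" using IJ(3) by auto
      thus ?thesis by simp
    qed
  qed
qed


lemma sabs_semb: "x \<noteq> \<infinity> \<Longrightarrow> sabs (semb x) = x"
  by (cases x) simp_all

lemma sabs_sneg_semb: "x \<noteq> \<infinity> \<Longrightarrow> sabs (sneg (semb x)) = x"
  by (cases x) simp_all

lemma term_val:
  assumes a: "a \<in> tpoints" and f: "f \<in> tpolys" and J: "J \<in> tsupp f"
  shows "smul (ftilde f i J) (smon (phi a) J) =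
           (if J = i then sneg (semb (mono_val f J a)) else semb (mono_val f J a))
         \<and> mono_val f J a \<noteq> \<infinity>"
proof -
  have "f J \<noteq> -\<infinity>" using J unfolding tsupp_def by simp
  moreover have "f J \<noteq> \<infinity>" using f unfolding tpolys_def by simp
  ultimately obtain c where c: "f J = ereal c" by (cases "f J") auto
  obtain e where e: "smon (phi a) J = semb e" "e \<noteq> \<infinity>" "e = esum J a UNIV"
    using smon_phi[OF a] by blast
  have mv: "mono_val f J a = ereal c + e" unfolding mono_val_def esum_def e(3) c ..
  have ft: "ftilde f i J = (if J = i then SNeg c else SPos c)" unfolding ftilde_def c by simp
  show ?thesis
  proof (cases e)
    case (real r)
    thus ?thesis using e mv ft by (cases "J = i") simp_all
  next
    case PInf
    thus ?thesis using e by simp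
  next
    case MInf
    thus ?thesis using e mv ft by (cases "J = i") simp_all
  qed
qed

lemma ssupp_ftilde: "ssupp (ftilde f i) = tsupp f"
  unfolding ssupp_def tsupp_def ftilde_def by auto

lemma key:
  assumes a: "a \<in> tpoints" and f: "f \<in> tpolys" and ne: "tsupp f \<noteq> {}"
  shows "a \<in> trop_hyp f \<longleftrightarrow> phi a \<in> HV f"
proof -
  define mv where "mv J = mono_val f J a" for J
  define tv where "tv i J = (if J = i then sneg (semb (mv J)) else semb (mv J))" for i J
  have fin: "finite (tsupp f)" using f unfolding tpolys_def by simp
  have tvJ: "smul (ftilde f i J) (smon (phi a) J) = tv i J" if "J \<in> tsupp f" for i J
    unfolding tv_def mv_def using term_val[OF a f that, of i] by blast
  have mvfin: "J \<in> tsupp f \<Longrightarrow> mv J \<noteq> \<infinity>" for J using term_val[OF a f] unfolding mv_def by blast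
  have ab: "\<forall>J\<in>tsupp f. sabs (tv i J) = mv J" for i
  proof
    fix J assume J: "J \<in> tsupp f"
    show "sabs (tv i J) = mv J"
    proof (cases "J = i")
      case True
      thus ?thesis unfolding tv_def using sabs_sneg_semb[OF mvfin[OF J]] by simp
    next
      case False
      thus ?thesis unfolding tv_def using sabs_semb[OF mvfin[OF J]] by simp
    qed
  qed
  have sv: "phi a \<in> sV (ftilde f i) \<longleftrightarrow> SZero \<in> SS (tv i ` tsupp f)" for i
  proof -
    have "seval (ftilde f i) (phi a) = SS ((\<lambda>I. smul (ftilde f i I) (smon (phi a) I)) ` ssupp (ftilde f i))"
      by (rule seval_SS) (simp only: ssupp_ftilde fin)
    also have "(\<lambda>I. smul (ftilde f i I) (smon (phi a) I)) ` ssupp (ftilde f i) = tv i ` tsupp f"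
      unfolding ssupp_ftilde by (rule image_cong[OF refl tvJ])
    finally have "seval (ftilde f i) (phi a) = SS (tv i ` tsupp f)" .
    thus ?thesis unfolding sV_def by blast
  qed
  have K: "phi a \<in> sV (ftilde f i) \<longleftrightarrow>
    ((\<forall>J\<in>tsupp f. mv J = -\<infinity>) \<or> (\<exists>I\<in>tsupp f. \<exists>J\<in>tsupp f. tv i I \<noteq> tv i J \<and> mv I = mv J \<and> (\<forall>L\<in>tsupp f. mv L \<le> mv I)))" for i
    unfolding sv by (rule abstract_key[OF fin ab])
  have th: "a \<in> trop_hyp f \<longleftrightarrow>
     ((\<exists>I\<in>tsupp f. \<exists>J\<in>tsupp f. I \<noteq> J \<and> mv I = mv J \<and> (\<forall>K\<in>tsupp f. mv K \<le> mv I))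
     \<or> (\<forall>K\<in>tsupp f. mv K = -\<infinity>))"
    unfolding trop_hyp_def mv_def using a by simp
  show ?thesis
  proof
    assume "a \<in> trop_hyp f"
    hence "(\<exists>I\<in>tsupp f. \<exists>J\<in>tsupp f. I \<noteq> J \<and> mv I = mv J \<and> (\<forall>K\<in>tsupp f. mv K \<le> mv I))
     \<or> (\<forall>K\<in>tsupp f. mv K = -\<infinity>)" by (rule iffD1[OF th])
    thus "phi a \<in> HV f"
    proof
      assume "\<exists>I\<in>tsupp f. \<exists>J\<in>tsupp f. I \<noteq> J \<and> mv I = mv J \<and> (\<forall>K\<in>tsupp f. mv K \<le> mv I)"
      then obtain I J where IJ: "I \<in> tsupp f" "J \<in> tsupp f" "I \<noteq> J" "mv I = mv J" "\<forall>K\<in>tsupp f. mv K \<le> mv I"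
        by blast
      have "phi a \<in> sV (ftilde f I)"
      proof (cases "mv I = -\<infinity>")
        case True
        have "\<forall>J\<in>tsupp f. mv J = -\<infinity>"
        proof
          fix L assume "L \<in> tsupp f"
          hence "mv L \<le> -\<infinity>" using IJ(5) True by simp
          thus "mv L = -\<infinity>" by simp
        qed
        thus ?thesis using K[of I] by (intro iffD2[OF K[of I]] disjI1)
      next
        case False
        then obtain r where r: "mv I = ereal r" using mvfin[OF IJ(1)] False by (cases "mv I") simp_all
        have "tv I I \<noteq> tv I J" unfolding tv_def using r IJ(3,4) by simp
        hence "\<exists>I'\<in>tsupp f. \<exists>J'\<in>tsupp f. tv I I' \<noteq> tv I J' \<and> mv I' = mv J' \<and> (\<forall>L\<in>tsupp f. mv L \<le> mv I')"
          using IJ by blast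
        thus ?thesis by (intro iffD2[OF K[of I]] disjI2)
      qed
      thus ?thesis using IJ(1) unfolding HV_def by blast
    next
      assume all: "\<forall>K\<in>tsupp f. mv K = -\<infinity>"
      obtain i where i: "i \<in> tsupp f" using ne by blast
      have "phi a \<in> sV (ftilde f i)" using all by (intro iffD2[OF K[of i]] disjI1)
      thus ?thesis using i unfolding HV_def by blast
    qed
  next
    assume "phi a \<in> HV f"
    then obtain i where i: "i \<in> tsupp f" "phi a \<in> sV (ftilde f i)" unfolding HV_def by blast
    hence D: "(\<forall>J\<in>tsupp f. mv J = -\<infinity>) \<or> (\<exists>I\<in>tsupp f. \<exists>J\<in>tsupp f. tv i I \<noteq> tv i J \<and> mv I = mv J \<and> (\<forall>L\<in>tsupp f. mv L \<le> mv I))"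
      using iffD1[OF K[of i]] by blast
    show "a \<in> trop_hyp f"
    proof (rule iffD2[OF th])
      show "(\<exists>I\<in>tsupp f. \<exists>J\<in>tsupp f. I \<noteq> J \<and> mv I = mv J \<and> (\<forall>K\<in>tsupp f. mv K \<le> mv I))
         \<or> (\<forall>K\<in>tsupp f. mv K = -\<infinity>)"
      proof (rule disjE[OF D])
        assume "\<forall>J\<in>tsupp f. mv J = -\<infinity>"
        thus ?thesis by (rule disjI2)
      next
        assume "\<exists>I\<in>tsupp f. \<exists>J\<in>tsupp f. tv i I \<noteq> tv i J \<and> mv I = mv J \<and> (\<forall>L\<in>tsupp f. mv L \<le> mv I)"
        then obtain I J where "I \<in> tsupp f" "J \<in> tsupp f" "tv i I \<noteq> tv i J" "mv I = mv J" "\<forall>L\<in>tsupp f. mv L \<le> mv I"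
          by blast
        moreover have "I \<noteq> J" using \<open>tv i I \<noteq> tv i J\<close> by metis
        ultimately have "\<exists>I\<in>tsupp f. \<exists>J\<in>tsupp f. I \<noteq> J \<and> mv I = mv J \<and> (\<forall>K\<in>tsupp f. mv K \<le> mv I)"
          by blast
        thus ?thesis by (rule disjI1)
      qed
    qed
  qed
qed

lemma semb_inj: "x \<noteq> \<infinity> \<Longrightarrow> y \<noteq> \<infinity> \<Longrightarrow> semb x = semb y \<Longrightarrow> x = y"
  by (cases x; cases y) simp_all

lemma phi_inj: "inj_on phi tpoints"
proof
  fix a b assume a: "a \<in> tpoints" and b: "b \<in> tpoints" and e: "phi a = phi b"
  show "a = b"
  proof
    fix i
    have "semb (a i) = semb (b i)" using e unfolding phi_def by meson
    thus "a i = b i" using a b semb_inj unfolding tpoints_def by blast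
  qed
qed

lemma ideal_elem:
  assumes "tideal I" "f \<in> I - {tpoly_zero}"
  shows "f \<in> tpolys \<and> tsupp f \<noteq> {}"
proof
  show "f \<in> tpolys" using assms unfolding tideal_def by blast
  show "tsupp f \<noteq> {}"
  proof
    assume "tsupp f = {}"
    hence "f = tpoly_zero" unfolding tsupp_def tpoly_zero_def by auto
    thus False using assms by blast
  qed
qed

theorem proposition4p18:
  fixes I :: "('n::finite) tpoly set"
  assumes "tideal I"
  shows "bij_betw phi (tropV I) ((\<Inter>f\<in>I - {tpoly_zero}. HV f) \<inter> phi ` tpoints)"
  unfolding bij_betw_def
proof
  have sub: "tropV I \<subseteq> tpoints" unfolding tropV_def by blast
  show "inj_on phi (tropV I)" using inj_on_subset[OF phi_inj sub] .
  show "phi ` tropV I = (\<Inter>f\<in>I - {tpoly_zero}. HV f) \<inter> phi ` tpoints"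
  proof
    show "phi ` tropV I \<subseteq> (\<Inter>f\<in>I - {tpoly_zero}. HV f) \<inter> phi ` tpoints"
    proof
      fix z assume "z \<in> phi ` tropV I"
      then obtain a where a: "a \<in> tropV I" "z = phi a" by blast
      have ap: "a \<in> tpoints" using a sub by blast
      have "phi a \<in> HV f" if "f \<in> I - {tpoly_zero}" for f
      proof -
        have E: "f \<in> tpolys" "tsupp f \<noteq> {}" using ideal_elem[OF assms that] by auto
        have "a \<in> trop_hyp f" using a(1) that unfolding tropV_def by blast
        thus ?thesis using key[OF ap E] by (rule iffD1[rotated])
      qed
      hence "phi a \<in> (\<Inter>f\<in>I - {tpoly_zero}. HV f)" by (rule INT_I)
      moreover have "phi a \<in> phi ` tpoints" using ap by (rule imageI)
      ultimately show "z \<in> (\<Inter>f\<in>I - {tpoly_zero}. HV f) \<inter> phi ` tpoints" using a(2) by (simp only: IntI)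
    qed
  next
    show "(\<Inter>f\<in>I - {tpoly_zero}. HV f) \<inter> phi ` tpoints \<subseteq> phi ` tropV I"
    proof
      fix z assume z: "z \<in> (\<Inter>f\<in>I - {tpoly_zero}. HV f) \<inter> phi ` tpoints"
      then obtain a where a: "a \<in> tpoints" "z = phi a" by blast
      have "a \<in> trop_hyp f" if "f \<in> I - {tpoly_zero}" for f
      proof -
        have E: "f \<in> tpolys" "tsupp f \<noteq> {}" using ideal_elem[OF assms that] by auto
        have "phi a \<in> HV f" using z a(2) that by blast
        thus ?thesis using key[OF a(1) E] by (rule iffD2[rotated])
      qed
      hence "a \<in> tropV I" unfolding tropV_def using a(1) by blast
      thus "z \<in> phi ` tropV I" using a(2) by blast
    qed
  qed
qed

end
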